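(* Let $\epsilon\in(0,1)$, $C_0>0$ and $A\ge1$. There exist $\delta>0$, $N_0\in\mathbb N$ and $C>0$ such that for every $n\in\mathbb Z$ with $|n|\ge N_0$ and every dyadic number $M\ge1$, the Lebesgue measure of the set $$\{\mu\in\mathbb R:\ M/2\le|\mu|\le 2M,\ \exists\, r\in\mathbb Z \text{ with } A^{-1}|n|\le |r|\le A|n| \text{ and } |\mu-(r^3-r^2-2nr)|\le C_0|r|^{2-\epsilon}\}$$ is at most $CM^{1-\delta}$.
   Context: A dyadic number is one of the form $2^j$, $j\in\mathbb Z_{\ge0}$. *)

theory Defs
  imports "HOL-Analysis.Analysis"
begin

end

theory Submission
  imports Defs
begin

lemma key:
  fixes \<epsilon> C\<^sub>0 A :: real and n :: int and j :: nat
  assumes e0: "0 < \<epsilon>" and e1: "\<epsilon> < 1" and c0: "C\<^sub>0 > 0" and A1: "A \<ge> 1"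
    and hn: "\<bar>real_of_int n\<bar> \<ge> 2*A*(1+2*A+C\<^sub>0)"
  shows "measure lborel
        {\<mu>::real. (2::real)^j / 2 \<le> \<bar>\<mu>\<bar> \<and> \<bar>\<mu>\<bar> \<le> 2 * 2^j \<and>
           (\<exists>r::int. \<bar>real_of_int n\<bar> / A \<le> \<bar>real_of_int r\<bar> \<and>
                      \<bar>real_of_int r\<bar> \<le> A * \<bar>real_of_int n\<bar> \<and>
                      \<bar>\<mu> - real_of_int (r^3 - r^2 - 2*n*r)\<bar> \<le> C\<^sub>0 * \<bar>real_of_int r\<bar> powr (2 - \<epsilon>))}
      \<le> (24*C\<^sub>0*A^6) * ((2::real)^j) powr (1 - \<epsilon>/3)" (is "measure lborel ?S \<le> ?R")
proof -
  define a where "a = \<bar>real_of_int n\<bar>"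
  define x where "x = (2::real)^j"
  define K where "K = \<lfloor>A*a\<rfloor>"
  define w where "w = C\<^sub>0 * (A*a) powr (2-\<epsilon>)"
  define f where "f r = real_of_int (r^3 - r^2 - 2*n*r)" for r
  have a2: "a \<ge> 2*A*(1+2*A+C\<^sub>0)" using hn a_def by simp
  have "1*1 \<le> A*(1+2*A+C\<^sub>0)" using A1 c0 by (intro mult_mono) auto
  then have apos: "a \<ge> 1" using a2 by linarith
  have Aa1: "A*a \<ge> 1" using mult_mono[of 1 A 1 a] apos A1 by simp
  have x0: "x > 0" unfolding x_def by simp
  have Rpos: "?R \<ge> 0" using c0 A1 by simp
  have sub: "?S \<subseteq> (\<Union>r\<in>{-K..K}. {f r - w .. f r + w})"
  proof
    fix \<mu> assume "\<mu> \<in> ?S"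
    then obtain r :: int where r1: "\<bar>real_of_int r\<bar> \<le> A * a"
      and r2: "\<bar>\<mu> - f r\<bar> \<le> C\<^sub>0 * \<bar>real_of_int r\<bar> powr (2 - \<epsilon>)"
      unfolding a_def f_def by blast
    have "r \<le> K" "-r \<le> K" using r1 unfolding K_def le_floor_iff by (auto simp: abs_le_iff)
    then have "r \<in> {-K..K}" by auto
    moreover have "\<bar>real_of_int r\<bar> powr (2 - \<epsilon>) \<le> (A*a) powr (2-\<epsilon>)"
      using r1 e1 by (intro powr_mono2) auto
    then have "\<bar>\<mu> - f r\<bar> \<le> w" using r2 c0 unfolding w_def
      by (smt (verit) mult_left_mono)
    ultimately show "\<mu> \<in> (\<Union>r\<in>{-K..K}. {f r - w .. f r + w})"
      by (intro UN_I[of r]) (auto simp: abs_le_iff)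
  qed
  show ?thesis
  proof (cases "?S = {}")
    case True show ?thesis using Rpos unfolding True by simp
  next
    case False
    then obtain \<mu> where "\<mu> \<in> ?S" by blast
    then obtain r :: int where mu2: "\<bar>\<mu>\<bar> \<le> 2*x" and r0: "a / A \<le> \<bar>real_of_int r\<bar>"
      and r1: "\<bar>real_of_int r\<bar> \<le> A * a"
      and r2: "\<bar>\<mu> - f r\<bar> \<le> C\<^sub>0 * \<bar>real_of_int r\<bar> powr (2 - \<epsilon>)"
      unfolding a_def f_def x_def by blast
    define \<rho> where "\<rho> = \<bar>real_of_int r\<bar>"
    have "2*(1+2*A+C\<^sub>0)*A \<le> a" using a2 by (simp add: mult_ac)
    then have "2*(1+2*A+C\<^sub>0) \<le> a/A" using A1 by (subst pos_le_divide_eq) auto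
    then have rho2: "\<rho> \<ge> 2*(1+2*A+C\<^sub>0)" using r0 unfolding \<rho>_def by linarith
    have rho1: "\<rho> \<ge> 1" using rho2 A1 c0 by (smt (verit))
    have "\<rho> powr (2-\<epsilon>) \<le> \<rho> powr 2" using rho1 e0 by (intro powr_mono) auto
    then have pw: "\<rho> powr (2-\<epsilon>) \<le> \<rho>^2" using rho1 by simp
    have "a/A*A \<le> \<rho>*A" using r0 A1 unfolding \<rho>_def by (intro mult_right_mono) auto
    then have aA: "a \<le> A*\<rho>" using A1 by (simp add: mult.commute)
    have fr: "\<bar>f r\<bar> \<ge> \<rho>^3 - \<rho>^2 - 2*a*\<rho>"
    proof -
      have "\<bar>real_of_int r^2 + 2*real_of_int n*real_of_int r\<bar> \<le> \<bar>real_of_int r^2\<bar> + \<bar>2*real_of_int n*real_of_int r\<bar>"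
        by (rule abs_triangle_ineq)
      also have "\<dots> = \<rho>^2 + 2*a*\<rho>" unfolding \<rho>_def a_def by (simp add: abs_mult)
      finally have h1: "\<bar>real_of_int r^2 + 2*real_of_int n*real_of_int r\<bar> \<le> \<rho>^2 + 2*a*\<rho>" .
      have h2: "\<bar>real_of_int r^3\<bar> = \<rho>^3" unfolding \<rho>_def by (simp add: power_abs)
      have h3: "f r = real_of_int r^3 - (real_of_int r^2 + 2*real_of_int n*real_of_int r)"
        unfolding f_def by simp
      have "\<bar>f r\<bar> \<ge> \<bar>real_of_int r^3\<bar> - \<bar>real_of_int r^2 + 2*real_of_int n*real_of_int r\<bar>"
        unfolding h3 by (rule abs_triangle_ineq2)
      then show ?thesis using h1 h2 by linarith
    qed
    have "2*\<rho>*a \<le> 2*\<rho>*(A*\<rho>)" using aA rho1 by (intro mult_left_mono) auto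
    then have t1: "2*a*\<rho> \<le> 2*A*\<rho>^2" by (simp add: power2_eq_square mult_ac)
    have t2: "C\<^sub>0 * \<rho> powr (2-\<epsilon>) \<le> C\<^sub>0 * \<rho>^2" using pw c0 by (intro mult_left_mono) auto
    have t3: "\<bar>\<mu>\<bar> \<ge> \<bar>f r\<bar> - \<bar>\<mu> - f r\<bar>" by linarith
    have t4: "(1+2*A+C\<^sub>0)*\<rho>^2 = \<rho>^2 + 2*A*\<rho>^2 + C\<^sub>0*\<rho>^2" by (simp add: algebra_simps)
    have "\<bar>\<mu>\<bar> \<ge> \<rho>^3 - (1+2*A+C\<^sub>0)*\<rho>^2"
      using fr r2 t1 t2 t3 t4 unfolding \<rho>_def[symmetric] by linarith
    moreover have "(1+2*A+C\<^sub>0)*\<rho>^2 \<le> \<rho>^3/2"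
    proof -
      have "(1+2*A+C\<^sub>0)*\<rho>^2 \<le> (\<rho>/2)*\<rho>^2" using rho2 by (intro mult_right_mono) auto
      then show ?thesis by (simp add: power3_eq_cube power2_eq_square)
    qed
    ultimately have "\<rho>^3 \<le> 4*x" using mu2 by linarith
    moreover have "(a/A)^3 \<le> \<rho>^3" using r0 apos A1 unfolding \<rho>_def
      by (intro power_mono) auto
    ultimately have "a^3 / A^3 \<le> 4*x" by (simp add: power_divide)
    then have "a^3 \<le> 4*x*A^3" using A1 by (simp add: divide_le_eq)
    then have "A^3*a^3 \<le> A^3*(4*x*A^3)" using A1 by (intro mult_left_mono) auto
    moreover have "A^3*(4*x*A^3) = 4*A^6*x" by (simp add: power_add[symmetric] mult_ac eval_nat_numeral)
    ultimately have ax: "(A*a)^3 \<le> 4*A^6*x" by (simp add: power_mult_distrib)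
    have meas: "measure lborel ?S \<le> measure lborel (\<Union>r\<in>{-K..K}. {f r - w .. f r + w})"
    proof (cases "?S \<in> sets lborel")
      case True
      show ?thesis
        by (rule measure_mono_fmeasurable[OF sub True])
           (intro fmeasurable.finite_UN, auto intro: fmeasurable_compact)
    next
      case False then show ?thesis by (simp add: measure_notin_sets)
    qed
    also have "\<dots> \<le> (\<Sum>r\<in>{-K..K}. measure lborel {f r - w .. f r + w})"
      by (rule measure_UNION_le) auto
    also have "\<dots> = (2*K+1) * (2*w)"
    proof -
      have w0: "w \<ge> 0" unfolding w_def using c0 by simp
      have "K \<ge> 0" unfolding K_def using Aa1 by simp
      then have "real (card {-K..K}) = 2*real_of_int K+1" by simp
      then show ?thesis using w0 by simp
    qed
    also have "\<dots> \<le> (3*(A*a)) * (2*w)"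
    proof (rule mult_right_mono)
      show "0 \<le> 2*w" unfolding w_def using c0 by simp
      have "real_of_int K \<le> A*a" unfolding K_def by simp
      then show "real_of_int (2*K+1) \<le> 3*(A*a)" using Aa1 by simp
    qed
    also have "\<dots> = 6*C\<^sub>0 * ((A*a) * (A*a) powr (2-\<epsilon>))" unfolding w_def by simp
    also have "(A*a) * (A*a) powr (2-\<epsilon>) = ((A*a)^3) powr (1-\<epsilon>/3)"
    proof -
      have "(A*a) powr (1 + (2-\<epsilon>)) = (A*a) powr 1 * (A*a) powr (2-\<epsilon>)"
        by (rule powr_add)
      then have "(A*a) * (A*a) powr (2-\<epsilon>) = (A*a) powr (1 + (2-\<epsilon>))"
        using Aa1 by simp
      also have "\<dots> = ((A*a) powr 3) powr (1-\<epsilon>/3)" by (simp add: powr_powr algebra_simps)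
      also have "\<dots> = ((A*a)^3) powr (1-\<epsilon>/3)" using Aa1 by (simp add: powr_realpow)
      finally show ?thesis .
    qed
    also have "6*C\<^sub>0 * ((A*a)^3) powr (1-\<epsilon>/3) \<le> 6*C\<^sub>0 * (4*A^6*x) powr (1-\<epsilon>/3)"
      using ax c0 e1 Aa1 by (intro mult_left_mono powr_mono2) auto
    also have "(4*A^6*x) powr (1-\<epsilon>/3) = (4*A^6) powr (1-\<epsilon>/3) * x powr (1-\<epsilon>/3)"
      using x0 A1 by (simp add: powr_mult)
    also have "1 \<le> A^6" using A1 by (simp add: one_le_power)
    then have "(4*A^6) powr (1-\<epsilon>/3) \<le> (4*A^6) powr 1"
      using e0 by (intro powr_mono) auto
    then have "6*C\<^sub>0 * ((4*A^6) powr (1-\<epsilon>/3) * x powr (1-\<epsilon>/3)) \<le> 6*C\<^sub>0 * ((4*A^6) * x powr (1-\<epsilon>/3))"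
      using c0 A1 by (intro mult_left_mono mult_right_mono) auto
    finally show ?thesis unfolding x_def by (simp add: mult_ac)
  qed
qed

lemma nbound:
  fixes c :: real and n :: int
  assumes h: "\<bar>n\<bar> \<ge> int (nat \<lceil>c\<rceil>)"
  shows "\<bar>real_of_int n\<bar> \<ge> c"
proof -
  have "\<lceil>c\<rceil> \<le> int (nat \<lceil>c\<rceil>)" by simp
  then have "\<lceil>c\<rceil> \<le> \<bar>n\<bar>" using h by (rule order_trans)
  then have q1: "real_of_int \<lceil>c\<rceil> \<le> real_of_int \<bar>n\<bar>" by (simp only: of_int_le_iff)
  have q2: "c \<le> real_of_int \<lceil>c\<rceil>" by (rule le_of_int_ceiling)
  have "c \<le> real_of_int \<bar>n\<bar>" by (rule order_trans[OF q2 q1])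
  then show ?thesis by (simp only: of_int_abs)
qed

theorem lemma3p4:
  fixes \<epsilon> C\<^sub>0 A :: real
  assumes "0 < \<epsilon>" and "\<epsilon> < 1" and "C\<^sub>0 > 0" and "A \<ge> 1"
  shows "\<exists>\<delta>>0. \<exists>N\<^sub>0::nat. \<exists>C>0.
    \<forall>(n::int) (j::nat). \<bar>n\<bar> \<ge> int N\<^sub>0 \<longrightarrow>
      measure lborel
        {\<mu>::real. (2::real)^j / 2 \<le> \<bar>\<mu>\<bar> \<and> \<bar>\<mu>\<bar> \<le> 2 * 2^j \<and>
           (\<exists>r::int. \<bar>real_of_int n\<bar> / A \<le> \<bar>real_of_int r\<bar> \<and>
                      \<bar>real_of_int r\<bar> \<le> A * \<bar>real_of_int n\<bar> \<and>
                      \<bar>\<mu> - real_of_int (r^3 - r^2 - 2*n*r)\<bar> \<le> C\<^sub>0 * \<bar>real_of_int r\<bar> powr (2 - \<epsilon>))}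
      \<le> C * ((2::real)^j) powr (1 - \<delta>)"
  apply (rule exI[of _ "\<epsilon>/3"], rule conjI, simp add: assms)
  apply (rule exI[of _ "nat \<lceil>2*A*(1+2*A+C\<^sub>0)\<rceil>"], rule exI[of _ "24*C\<^sub>0*A^6"], rule conjI)
   apply (metis assms(3,4) zero_less_one less_le_trans zero_less_power mult_pos_pos zero_less_numeral)
  apply (intro allI impI)
  apply (rule key[OF assms])
  apply (erule nbound)
  done

end
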